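(* Let $\xi$ be a positive random variable with $\mathbb{E}(\xi^\eta)=\infty$ for some $\eta<1$. Then for every $p\in[0,1)$, $$\mathbb{P}^\Lambda_p(o\leftrightarrow\infty)=0\quad\text{for }\upsilon_\xi\text{-almost every environment }\Lambda.$$
   Context: Let $\xi$ be a positive random variable and let $\xi_1,\xi_2,\dots$ be i.i.d. copies of $\xi$. Set $x_0=0$ and $x_k=x_{k-1}+\xi_k$ for $k\ge1$, and let $\Lambda=\{x_0,x_1,x_2,\dots\}\subseteq\mathbb{R}$ (the environment); $\upsilon_\xi$ denotes the law of $\Lambda$. Given $\Lambda$, let $\mathcal{L}_\Lambda$ be the graph with vertex set $\{(x_i,n): i\in\mathbb{Z}_+,\ n\in\mathbb{Z}_+\}\subseteq\mathbb{R}^2$ (with $\mathbb{Z}_+=\{0,1,2,\dots\}$) and edge set $\{\{(x_i,n),(x_j,m)\}: |i-j|+|n-m|=1\}$. For $p\in[0,1]$, $\mathbb{P}^\Lambda_p$ is the probability measure on $\{0,1\}^{E(\mathcal{L}_\Lambda)}$ under which the edges are independently open with probability $p_e=p^{|e|}$, where $|e|$ is the Euclidean length of $e$ (so vertical edges have length $1$, and horizontal edges between the $i$-th and $(i+1)$-th column have length $\xi_{i+1}$). Let $o=(0,0)$ and let $\{o\leftrightarrow\infty\}$ be the event that the open cluster of $o$ is infinite. *)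

theory Defs
  imports "HOL-Probability.Probability"
begin

text \<open>Vertices of the lattice L_Lambda are indexed by (i,n) :: nat \<times> nat, standing for
  the point (x_i, n).  Edges are indexed by (b,i,n) :: bool \<times> nat \<times> nat:
  (True,i,n) is the horizontal edge between (i,n) and (i+1,n);
  (False,i,n) is the vertical edge between (i,n) and (i,n+1).
  The environment is given by the sequence of gaps xs, where xs k = xi_(k+1),
  so x_i = sum of xs k for k < i.\<close>

type_synonym edge = "bool \<times> nat \<times> nat"
type_synonym vertex = "nat \<times> nat"

definition edge_length :: "(nat \<Rightarrow> real) \<Rightarrow> edge \<Rightarrow> real" where
  "edge_length xs e = (case e of (True, i, n) \<Rightarrow> xs i | (False, i, n) \<Rightarrow> 1)"

definition edge_prob :: "real \<Rightarrow> (nat \<Rightarrow> real) \<Rightarrow> edge \<Rightarrow> real" where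
  "edge_prob p xs e = (case e of (True, i, n) \<Rightarrow> p powr (xs i) | (False, i, n) \<Rightarrow> p)"

definition perc_measure :: "real \<Rightarrow> (nat \<Rightarrow> real) \<Rightarrow> (edge \<Rightarrow> bool) measure" where
  "perc_measure p xs = (\<Pi>\<^sub>M e\<in>UNIV. measure_pmf (bernoulli_pmf (edge_prob p xs e)))"

definition open_adj :: "(edge \<Rightarrow> bool) \<Rightarrow> vertex \<Rightarrow> vertex \<Rightarrow> bool" where
  "open_adj w u v =
     ((fst v = Suc (fst u) \<and> snd v = snd u \<and> w (True, fst u, snd u)) \<or>
      (fst u = Suc (fst v) \<and> snd v = snd u \<and> w (True, fst v, snd v)) \<or>
      (fst v = fst u \<and> snd v = Suc (snd u) \<and> w (False, fst u, snd u)) \<or>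
      (fst v = fst u \<and> snd u = Suc (snd v) \<and> w (False, fst v, snd v)))"

definition open_cluster :: "(edge \<Rightarrow> bool) \<Rightarrow> vertex \<Rightarrow> vertex set" where
  "open_cluster w v = {u. (open_adj w)\<^sup>*\<^sup>* v u}"

definition percolates :: "(edge \<Rightarrow> bool) set" where
  "percolates = {w. infinite (open_cluster w (0, 0))}"

end

theory Submission
  imports Defs
begin


abbreviation PM :: "real \<Rightarrow> (nat \<Rightarrow> real) \<Rightarrow> (edge \<Rightarrow> bool) measure" where
  "PM p xs \<equiv> perc_measure p xs"

lemma space_perc[simp]: "space (perc_measure p xs) = UNIV"
  by (simp add: perc_measure_def space_PiM)

lemma pred_const_bool[measurable]: "Measurable.pred M (\<lambda>w. (c::bool))"
  by (rule measurable_const) simp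

lemma pred_coord[measurable]: "Measurable.pred (perc_measure p xs) (\<lambda>w. w (e::edge))"
proof -
  have "(\<lambda>w. w e) \<in> measurable (perc_measure p xs) (measure_pmf (bernoulli_pmf (edge_prob p xs e)))"
    unfolding perc_measure_def by (rule measurable_component_singleton) simp
  also have "\<dots> = measurable (perc_measure p xs) (count_space UNIV)"
    by (rule measurable_cong_sets) auto
  finally show ?thesis .
qed

lemma pred_adj[measurable]: "Measurable.pred (perc_measure p xs) (\<lambda>w. open_adj w u v)"
  unfolding open_adj_def by measurable

lemma pred_pow[measurable]: "Measurable.pred (perc_measure p xs) (\<lambda>w. (open_adj w ^^ n) u v)"
proof (induction n arbitrary: v)
  case 0 then show ?case by simp
next
  case (Suc n)
  have "(\<lambda>w. (open_adj w ^^ Suc n) u v) = (\<lambda>w. \<exists>y::vertex. (open_adj w ^^ n) u y \<and> open_adj w y v)"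
    by (auto simp: relcompp_apply fun_eq_iff)
  then show ?case using Suc by (simp; measurable)
qed

lemma infinite_iff_unbounded: "infinite (S :: vertex set) \<longleftrightarrow> (\<forall>N. \<exists>v\<in>S. N \<le> fst v + snd v)"
proof
  assume inf: "infinite S"
  show "\<forall>N. \<exists>v\<in>S. N \<le> fst v + snd v"
  proof (rule ccontr)
    assume "\<not> ?thesis"
    then obtain N where "\<forall>v\<in>S. fst v + snd v < N" by (auto simp: not_le)
    then have "S \<subseteq> {..N} \<times> {..N}" by force
    then show False using inf finite_subset by blast
  qed
next
  assume H: "\<forall>N. \<exists>v\<in>S. N \<le> fst v + snd v"
  show "infinite S"
  proof
    assume "finite S"
    then have "finite ((\<lambda>v. fst v + snd v) ` S)" by simp
    then obtain N where N: "\<forall>x\<in>(\<lambda>v. fst v + snd v) ` S. x < N"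
      using finite_nat_set_iff_bounded by blast
    obtain v where v: "v \<in> S" "N \<le> fst v + snd v" using H by blast
    have "fst v + snd v < N" using N v(1) by blast
    with v(2) show False by simp
  qed
qed

lemma percolates_sets: "percolates \<in> sets (perc_measure p xs)"
proof -
  have "percolates = {w\<in>space (perc_measure p xs). \<forall>N. \<exists>v::vertex. N \<le> fst v + snd v \<and> (\<exists>n. (open_adj w ^^ n) (0,0) v)}"
    unfolding percolates_def open_cluster_def infinite_iff_unbounded
    by (auto simp: rtranclp_power) blast+
  also have "\<dots> \<in> sets (perc_measure p xs)"
    by measurable
  finally show ?thesis .
qed



definition Nf :: "real \<Rightarrow> (nat \<Rightarrow> real) \<Rightarrow> edge \<Rightarrow> bool measure" where
  "Nf p xs e = measure_pmf (bernoulli_pmf (edge_prob p xs e))"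

lemma perc_eq: "perc_measure p xs = PiM UNIV (Nf p xs)"
  by (simp add: perc_measure_def Nf_def[abs_def])

lemma pps: "product_prob_space (Nf p xs)"
  unfolding product_prob_space_def product_prob_space_axioms_def product_sigma_finite_def Nf_def
  by (auto intro: prob_space_measure_pmf prob_space_imp_sigma_finite)

lemma prob_space_perc: "prob_space (perc_measure p xs)"
  unfolding perc_measure_def by (intro prob_space_PiM prob_space_measure_pmf)

lemma sets_Nf[simp]: "sets (Nf p xs e) = UNIV" and space_Nf[simp]: "space (Nf p xs e) = UNIV"
  by (simp_all add: Nf_def)

lemma ev_sets[measurable]: "{w. w e} \<in> sets (perc_measure p xs)"
  using predE[OF pred_coord[where p=p and xs=xs and e=e]] by simp

lemma trap:
  assumes "k < H" "\<forall>i\<le>n. \<not> w (False,i,k)" "\<forall>h<H. \<not> w (True,n,h)"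
  shows "w \<notin> percolates"
proof -
  have box: "fst u \<le> n \<and> snd u \<le> k" if "(open_adj w)\<^sup>*\<^sup>* (0,0) u" for u
    using that
  proof (induction rule: rtranclp_induct)
    case base then show ?case by simp
  next
    case (step y z)
    have y: "fst y \<le> n" "snd y \<le> k" using step.IH by auto
    show ?case using step.hyps(2) unfolding open_adj_def
    proof (elim disjE conjE)
      assume a: "fst z = Suc (fst y)" "snd z = snd y" "w (True, fst y, snd y)"
      have "fst y \<noteq> n"
      proof
        assume "fst y = n"
        then have "w (True, n, snd y)" using a by simp
        moreover have "snd y < H" using y assms(1) by simp
        ultimately show False using assms(3) by blast
      qed
      then show ?thesis using a y by simp
    next
      assume a: "fst z = fst y" "snd z = Suc (snd y)" "w (False, fst y, snd y)"
      have "snd y \<noteq> k"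
      proof
        assume "snd y = k"
        then have "w (False, fst y, k)" using a by simp
        then show False using assms(2) y by blast
      qed
      then show ?thesis using a y by simp
    qed (use y in auto)
  qed
  have "open_cluster w (0,0) \<subseteq> {..n} \<times> {..k}"
    using box by (force simp: open_cluster_def)
  then have "finite (open_cluster w (0,0))" by (rule finite_subset) simp
  then show ?thesis by (simp add: percolates_def)
qed

definition Aev :: "nat \<Rightarrow> nat \<Rightarrow> (edge \<Rightarrow> bool) set" where
  "Aev n H = {w. \<forall>k<H. \<exists>i\<le>n. w (False,i,k)}"
definition Bev :: "nat \<Rightarrow> nat \<Rightarrow> (edge \<Rightarrow> bool) set" where
  "Bev n H = (\<Union>h<H. {w. w (True,n,h)})"

lemma perc_sub: "percolates \<subseteq> Aev n H \<union> Bev n H"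
proof
  fix w assume w: "w \<in> percolates"
  show "w \<in> Aev n H \<union> Bev n H"
  proof (rule ccontr)
    assume "\<not> ?thesis"
    then have nA: "w \<notin> Aev n H" and nB: "w \<notin> Bev n H" by auto
    from nA obtain k where "k < H" "\<forall>i\<le>n. \<not> w (False,i,k)" by (auto simp: Aev_def)
    moreover from nB have "\<forall>h<H. \<not> w (True,n,h)" by (auto simp: Bev_def)
    ultimately have "w \<notin> percolates" by (rule trap)
    with w show False by simp
  qed
qed

lemma measure_single:
  assumes "0 \<le> p"
  shows "measure (perc_measure p xs) {w. w e} \<le> edge_prob p xs e"
proof -
  interpret product_prob_space "Nf p xs" UNIV by (rule pps)
  have "emeasure (perc_measure p xs) {w. w e} = emeasure (Nf p xs e) {True}"
    using emeasure_PiM_Collect_single[of e "{True}"] by (simp add: perc_eq space_PiM)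
  then have "measure (perc_measure p xs) {w. w e} = pmf (bernoulli_pmf (edge_prob p xs e)) True"
    by (simp add: Nf_def emeasure_pmf_single measure_def)
  also have "\<dots> \<le> edge_prob p xs e"
  proof (cases "edge_prob p xs e \<le> 1")
    case True
    moreover have "0 \<le> edge_prob p xs e" using assms by (auto simp: edge_prob_def split: bool.split prod.split)
    ultimately show ?thesis by simp
  next
    case False then show ?thesis using pmf_le_1[of "bernoulli_pmf (edge_prob p xs e)" True] by linarith
  qed
  finally show ?thesis .
qed

lemma measure_B:
  assumes "0 \<le> p"
  shows "measure (perc_measure p xs) (Bev n H) \<le> real H * p powr xs n"
proof -
  interpret PS: prob_space "perc_measure p xs" by (rule prob_space_perc)
  have "measure (perc_measure p xs) (Bev n H) \<le> (\<Sum>h<H. measure (perc_measure p xs) {w. w (True,n,h)})"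
    unfolding Bev_def by (intro PS.finite_measure_subadditive_finite) (auto intro: ev_sets)
  also have "\<dots> \<le> (\<Sum>h<H. p powr xs n)"
    by (intro sum_mono order_trans[OF measure_single[OF assms]]) (simp add: edge_prob_def)
  finally show ?thesis by simp
qed



lemma indep_coords:
  "prob_space.indep_vars (perc_measure p xs) (Nf p xs) (\<lambda>e w. w e) UNIV"
proof -
  interpret PS: prob_space "perc_measure p xs" by (rule prob_space_perc)
  have rv: "(\<lambda>w. w e) \<in> measurable (perc_measure p xs) (Nf p xs e)" for e
    unfolding perc_eq by (rule measurable_component_singleton) simp
  have "PS.indep_vars (Nf p xs) (\<lambda>e w. w e) UNIV \<longleftrightarrow>
     distr (perc_measure p xs) (PiM UNIV (Nf p xs)) (\<lambda>x. \<lambda>i\<in>UNIV. x i) = PiM UNIV (\<lambda>i. distr (perc_measure p xs) (Nf p xs i) (\<lambda>x. x i))"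
    by (rule PS.indep_vars_iff_distr_eq_PiM) (auto intro: rv)
  moreover have "distr (perc_measure p xs) (Nf p xs i) (\<lambda>x. x i) = Nf p xs i" for i
    unfolding perc_eq by (rule distr_PiM_component) (auto simp: Nf_def intro: prob_space_measure_pmf)
  moreover have "(\<lambda>x::edge\<Rightarrow>bool. \<lambda>i\<in>UNIV. x i) = (\<lambda>x. x)" by (simp add: fun_eq_iff)
  ultimately show ?thesis by (simp add: perc_eq distr_id)
qed

lemma measure_A:
  assumes "0 \<le> p" "p \<le> 1" "0 < H"
  shows "measure (perc_measure p xs) (Aev n H) = (1 - (1-p)^Suc n)^H"
proof -
  interpret PS: prob_space "perc_measure p xs" by (rule prob_space_perc)
  interpret PP: product_prob_space "Nf p xs" UNIV by (rule pps)
  define K where "K (k::nat) = (\<lambda>i::nat. (False,i,k)) ` {..n}" for k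
  have disj: "disjoint_family_on K {..<H}" unfolding disjoint_family_on_def K_def by auto
  have ind: "PS.indep_vars (\<lambda>k. PiM (K k) (Nf p xs)) (\<lambda>k w. restrict (\<lambda>e. w e) (K k)) {..<H}"
    by (rule PS.indep_vars_restrict[OF indep_coords _ disj]) simp
  define S where "S k = {f \<in> space (PiM (K k) (Nf p xs)). \<exists>i\<le>n. f (False,i,k)}" for k
  have Ssets: "S k \<in> sets (PiM (K k) (Nf p xs))" for k
  proof -
    have "S k = (\<Union>i\<in>{..n}. (\<lambda>f. f (False,i,k)) -` {True} \<inter> space (PiM (K k) (Nf p xs)))"
      by (auto simp: S_def)
    also have "\<dots> \<in> sets (PiM (K k) (Nf p xs))"
      by (intro sets.finite_UN measurable_sets[OF measurable_component_singleton]) (auto simp: K_def)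
    finally show ?thesis .
  qed
  have pre: "(\<lambda>w. restrict (\<lambda>e. w e) (K k)) -` S k \<inter> space (perc_measure p xs) = {w. \<exists>i\<le>n. w (False,i,k)}" for k
    by (auto simp: S_def K_def space_PiM PiE_iff)
  have "Aev n H = (\<Inter>k\<in>{..<H}. (\<lambda>w. restrict (\<lambda>e. w e) (K k)) -` S k \<inter> space (perc_measure p xs))"
    using pre assms(3) by (auto simp: Aev_def)
  then have "measure (perc_measure p xs) (Aev n H) = (\<Prod>k<H. measure (perc_measure p xs) ((\<lambda>w. restrict (\<lambda>e. w e) (K k)) -` S k \<inter> space (perc_measure p xs)))"
    using PS.indep_varsD[OF ind, of "{..<H}" S] Ssets assms(3) by auto
  also have "\<dots> = (\<Prod>k<H. 1 - (1-p)^Suc n)"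
  proof (rule prod.cong[OF refl])
    fix k assume "k \<in> {..<H}"
    have pr: "Measurable.pred (perc_measure p xs) (\<lambda>w. \<forall>i\<le>n. \<not> w (False,i,k))" by measurable
    have ev2: "{w. \<forall>i\<le>n. \<not> w (False,i,k)} \<in> sets (perc_measure p xs)"
      using predE[OF pr] by simp
    have c: "{w. \<exists>i\<le>n. w (False,i,k)} = space (perc_measure p xs) - {w. \<forall>i\<le>n. \<not> w (False,i,k)}"
      by auto
    have c2: "{w. \<forall>i\<le>n. \<not> w (False,i,k)} = {w \<in> space (PiM UNIV (Nf p xs)). \<forall>e\<in>K k. w e \<in> {False}}"
      by (auto simp: K_def space_PiM)
    have "emeasure (PiM UNIV (Nf p xs)) {w \<in> space (PiM UNIV (Nf p xs)). \<forall>e\<in>K k. w e \<in> {False}} = (\<Prod>e\<in>K k. emeasure (Nf p xs e) {False})"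
      by (rule PP.emeasure_PiM_Collect) (auto simp: K_def)
    also have "\<dots> = (\<Prod>e\<in>K k. ennreal (1-p))"
      by (intro prod.cong) (auto simp: K_def Nf_def emeasure_pmf_single edge_prob_def assms)
    also have "\<dots> = ennreal ((1-p)^Suc n)"
    proof -
      have "card (K k) = Suc n" unfolding K_def by (subst card_image) (auto simp: inj_on_def)
      then show ?thesis using assms by (simp only: prod_constant) (subst ennreal_power, auto)
    qed
    finally have "emeasure (perc_measure p xs) {w. \<forall>i\<le>n. \<not> w (False,i,k)} = ennreal ((1-p)^Suc n)"
      by (simp add: c2 perc_eq)
    then have m: "measure (perc_measure p xs) {w. \<forall>i\<le>n. \<not> w (False,i,k)} = (1-p)^Suc n"
      using assms by (simp add: PS.emeasure_eq_measure)
    show "measure (perc_measure p xs) ((\<lambda>w. restrict (\<lambda>e. w e) (K k)) -` S k \<inter> space (perc_measure p xs)) = 1 - (1-p)^Suc n"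
      unfolding pre c by (subst PS.prob_compl[OF ev2]) (simp add: m)
  qed
  finally show ?thesis by simp
qed



lemma perc_bound:
  assumes "0 \<le> p" "p < 1" "0 < H"
  shows "measure (perc_measure p xs) percolates \<le> (1 - (1-p)^Suc n)^H + real H * p powr xs n"
proof -
  interpret PS: prob_space "perc_measure p xs" by (rule prob_space_perc)
  have pr: "Measurable.pred (perc_measure p xs) (\<lambda>w. \<forall>k<H. \<exists>i\<le>n. w (False,i,k))" by measurable
  have Aset: "Aev n H \<in> sets (perc_measure p xs)"
    using predE[OF pr] by (simp add: Aev_def)
  have Bset: "Bev n H \<in> sets (perc_measure p xs)"
    unfolding Bev_def by (auto intro: ev_sets)
  have "measure (perc_measure p xs) percolates \<le> measure (perc_measure p xs) (Aev n H \<union> Bev n H)"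
    using Aset Bset perc_sub by (intro PS.finite_measure_mono) auto
  also have "\<dots> \<le> measure (perc_measure p xs) (Aev n H) + measure (perc_measure p xs) (Bev n H)"
    using Aset Bset by (rule measure_Un_le)
  also have "\<dots> \<le> (1 - (1-p)^Suc n)^H + real H * p powr xs n"
    using measure_A[where p=p and H=H and n=n and xs=xs] measure_B[where p=p and xs=xs and n=n and H=H] assms by simp
  finally show ?thesis .
qed

lemma four_pow: "real (n+1) * (real n + 2) \<le> 4 ^ Suc n"
proof (induction n)
  case 0 then show ?case by simp
next
  case (Suc n)
  have "real (Suc n + 1) * (real (Suc n) + 2) \<le> 4 * (real (n+1) * (real n + 2))"
    by (simp add: algebra_simps)
  also have "\<dots> \<le> 4 * 4 ^ Suc n" using Suc by simp
  finally show ?case by simp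
qed

lemma numeric:
  assumes p: "0 < p" "p < 1" and K: "p powr K = (1-p)/4" and x: "K * real (Suc n) \<le> x"
  shows "\<exists>H>0. (1 - (1-p)^Suc n)^H + real H * p powr x \<le> 2 / real (Suc n)"
proof -
  define q where "q = (1-p)^Suc n"
  have q0: "0 < q" using p by (simp add: q_def)
  have q1: "q \<le> 1" unfolding q_def using p by (intro power_le_one) auto
  define H where "H = nat \<lceil>real (Suc n) / q\<rceil>"
  have Hge: "real (Suc n) / q \<le> real H" unfolding H_def by linarith
  have Hle: "real H \<le> real (Suc n) / q + 1"
    unfolding H_def using q0 of_int_ceiling_le_add_one[of "real (Suc n) / q"] by simp
  have qH: "real (Suc n) \<le> q * real H" using Hge q0 by (simp add: field_simps)
  have H0: "0 < H"
  proof -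
    have "real (Suc n) / q > 0" using q0 by simp
    then show ?thesis using Hge by linarith
  qed
  have t1: "(1 - q)^H \<le> 1 / real (Suc n)"
  proof -
    have "(1 - q)^H \<le> exp (-q) ^ H"
      by (intro power_mono) (use q1 exp_ge_add_one_self[of "-q"] in auto)
    also have "\<dots> = exp (- (q * real H))"
      by (subst exp_of_nat_mult[symmetric]) (simp add: mult.commute)
    also have "\<dots> \<le> exp (- real (Suc n))" using qH by simp
    also have "\<dots> = 1 / exp (real (Suc n))" by (subst exp_minus) (simp add: divide_inverse)
    also have "\<dots> \<le> 1 / real (Suc n)"
      using exp_ge_add_one_self[of "real (Suc n)"] by (intro divide_left_mono) auto
    finally show ?thesis .
  qed
  have t2: "p powr x \<le> q / 4 ^ Suc n"
  proof -
    have "p powr x \<le> p powr (K * real (Suc n))" using x p by (intro powr_mono') auto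
    also have "\<dots> = (p powr K) powr (real (Suc n))"
      by (simp only: powr_powr)
    also have "\<dots> = (p powr K) ^ Suc n"
      using p by (intro powr_realpow) simp
    also have "\<dots> = q / 4 ^ Suc n" by (simp add: K q_def power_divide)
    finally show ?thesis .
  qed
  have "real H * p powr x \<le> (real (Suc n) / q + 1) * (q / 4 ^ Suc n)"
    using Hle t2 q0 by (intro mult_mono) auto
  also have "\<dots> = (real (Suc n) + q) / 4 ^ Suc n" using q0 by (simp add: field_simps)
  also have "\<dots> \<le> (real n + 2) / 4 ^ Suc n" using q1 by (intro divide_right_mono) auto
  also have "\<dots> \<le> 1 / real (Suc n)"
    using four_pow[of n] by (simp add: field_simps)
  finally have "real H * p powr x \<le> 1 / real (Suc n)" .
  with t1 H0 show ?thesis unfolding q_def by (intro exI[of _ H]) auto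
qed



lemma count_ge:
  fixes x K :: real assumes K: "0 < K" and x: "0 \<le> x"
  shows "ennreal x \<le> ennreal K * (1 + (\<Sum>n. if K * real (Suc n) \<le> x then 1 else 0))"
proof -
  define m where "m = nat \<lfloor>x / K\<rfloor>"
  have f0: "0 \<le> \<lfloor>x / K\<rfloor>" using K x by simp
  have mr: "real m = real_of_int \<lfloor>x / K\<rfloor>" using f0 unfolding m_def by simp
  have m1: "real m \<le> x / K" using mr by simp
  have m2: "x / K < real m + 1" using mr real_of_int_floor_add_one_gt[of "x/K"] by simp
  have all: "K * real (Suc n) \<le> x" if "n < m" for n
  proof -
    have "real (Suc n) \<le> real m" using that by simp
    then have "K * real (Suc n) \<le> K * real m" using K by simp
    also have "\<dots> \<le> x" using m1 K by (simp add: field_simps)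
    finally show ?thesis .
  qed
  have "(\<Sum>n<m. (if K * real (Suc n) \<le> x then 1 else 0) :: ennreal) = (\<Sum>n<m. 1)"
    using all by (intro sum.cong) auto
  also have "\<dots> = of_nat m" by simp
  finally have s: "(of_nat m :: ennreal) \<le> (\<Sum>n. if K * real (Suc n) \<le> x then 1 else 0)"
    by (metis (no_types, lifting) ennreal_suminf_lessD finite_lessThan leI less_irrefl sum_le_suminf summableI zero_le)
  have "x \<le> K * (1 + real m)" using m2 K by (simp add: field_simps)
  then have "ennreal x \<le> ennreal (K * (1 + real m))" by (rule ennreal_leI)
  also have "\<dots> = ennreal K * (1 + of_nat m)"
    using K by (simp add: ennreal_mult ennreal_plus ennreal_of_nat_eq_real_of_nat)
  also have "\<dots> \<le> ennreal K * (1 + (\<Sum>n. if K * real (Suc n) \<le> x then 1 else 0))"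
    using s by (intro mult_left_mono add_left_mono) auto
  finally show ?thesis .
qed

lemma sum_shift_aux: "(\<Sum>i<m. a (i+N)) = (\<Sum>n\<in>{N..<N+m}. (a::nat\<Rightarrow>real) n)"
  by (induction m) (simp_all add: add.commute)

lemma BC:
  fixes M :: "'a measure" and \<xi> :: "'a \<Rightarrow> real"
  assumes "prob_space M" "\<xi> \<in> borel_measurable M" "AE \<omega> in M. \<xi> \<omega> > 0" "0 < \<eta>" "\<eta> < 1"
    "(\<integral>\<^sup>+\<omega>. ennreal (\<xi> \<omega> powr \<eta>) \<partial>M) = \<infinity>" "0 < K"
  shows "AE xs in (\<Pi>\<^sub>M k\<in>UNIV. distr M borel \<xi>). \<forall>N. \<exists>n\<ge>N. K * real (Suc n) \<le> xs n"
proof -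
  interpret prob_space M by fact
  define a where "a n = prob {\<omega>\<in>space M. K * real (Suc n) \<le> \<xi> \<omega>}" for n
  have sets_a[measurable]: "{\<omega>\<in>space M. c \<le> \<xi> \<omega>} \<in> sets M" for c using assms(2) by measurable
  have int_top: "(\<integral>\<^sup>+\<omega>. ennreal (\<xi> \<omega>) \<partial>M) = \<infinity>"
  proof -
    have "\<infinity> = (\<integral>\<^sup>+\<omega>. ennreal (\<xi> \<omega> powr \<eta>) \<partial>M)" using assms(6) by simp
    also have "\<dots> \<le> (\<integral>\<^sup>+\<omega>. 1 + ennreal (\<xi> \<omega>) \<partial>M)"
    proof (rule nn_integral_mono_AE)
      show "AE \<omega> in M. ennreal (\<xi> \<omega> powr \<eta>) \<le> 1 + ennreal (\<xi> \<omega>)"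
        using assms(3)
      proof eventually_elim
        fix \<omega> assume pos: "0 < \<xi> \<omega>"
        have "\<xi> \<omega> powr \<eta> \<le> 1 + \<xi> \<omega>"
        proof (cases "\<xi> \<omega> \<le> 1")
          case True then have "\<xi> \<omega> powr \<eta> \<le> 1" using pos assms(4) by (intro powr_le1) auto
          then show ?thesis using pos by simp
        next
          case False
          then have "\<xi> \<omega> powr \<eta> \<le> \<xi> \<omega> powr 1" using assms(5) by (intro powr_mono) auto
          then show ?thesis using pos by simp
        qed
        then have "ennreal (\<xi> \<omega> powr \<eta>) \<le> ennreal (1 + \<xi> \<omega>)" by (rule ennreal_leI)
        then show "ennreal (\<xi> \<omega> powr \<eta>) \<le> 1 + ennreal (\<xi> \<omega>)"
          using pos by (simp add: ennreal_plus)
      qed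
    qed
    also have "\<dots> = 1 + (\<integral>\<^sup>+\<omega>. ennreal (\<xi> \<omega>) \<partial>M)"
      using assms(2) by (subst nn_integral_add) (auto simp: emeasure_space_1)
    finally have "1 + (\<integral>\<^sup>+\<omega>. ennreal (\<xi> \<omega>) \<partial>M) = \<infinity>" by (simp add: top_unique)
    then show ?thesis by (simp add: ennreal_add_eq_top)
  qed
  have a_nonneg: "0 \<le> a n" for n by (simp add: a_def)
  have a_le1: "a n \<le> 1" for n by (simp add: a_def)
  have sum_top: "(\<Sum>n. ennreal (a n)) = \<infinity>"
  proof (rule ccontr)
    assume fin: "(\<Sum>n. ennreal (a n)) \<noteq> \<infinity>"
    define S where "S \<omega> = (\<Sum>n. indicator {\<omega>\<in>space M. K * real (Suc n) \<le> \<xi> \<omega>} \<omega> :: ennreal)" for \<omega>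
    have Smeas[measurable]: "S \<in> borel_measurable M" unfolding S_def by measurable
    have "(\<integral>\<^sup>+\<omega>. ennreal (\<xi> \<omega>) \<partial>M) \<le> (\<integral>\<^sup>+\<omega>. ennreal K * (1 + S \<omega>) \<partial>M)"
    proof (rule nn_integral_mono_AE)
      show "AE \<omega> in M. ennreal (\<xi> \<omega>) \<le> ennreal K * (1 + S \<omega>)"
        using assms(3) AE_space
      proof eventually_elim
        fix \<omega> assume pos: "0 < \<xi> \<omega>" and sp: "\<omega> \<in> space M"
        have "(\<lambda>n. indicator {\<omega>\<in>space M. K * real (Suc n) \<le> \<xi> \<omega>} \<omega> :: ennreal) =
              (\<lambda>n. if K * real (Suc n) \<le> \<xi> \<omega> then 1 else 0)"
          using sp by (auto simp: fun_eq_iff indicator_def)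
        then show "ennreal (\<xi> \<omega>) \<le> ennreal K * (1 + S \<omega>)"
          using count_ge[OF assms(7), of "\<xi> \<omega>"] pos by (simp add: S_def)
      qed
    qed
    also have "\<dots> = ennreal K * (\<integral>\<^sup>+\<omega>. 1 + S \<omega> \<partial>M)"
      by (rule nn_integral_cmult) measurable
    also have "(\<integral>\<^sup>+\<omega>. 1 + S \<omega> \<partial>M) = 1 + (\<integral>\<^sup>+\<omega>. S \<omega> \<partial>M)"
      by (subst nn_integral_add) (auto simp: emeasure_space_1)
    also have "(\<integral>\<^sup>+\<omega>. S \<omega> \<partial>M) = (\<Sum>n. emeasure M {\<omega>\<in>space M. K * real (Suc n) \<le> \<xi> \<omega>})"
      unfolding S_def by (subst nn_integral_suminf) (auto simp: nn_integral_indicator)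
    also have "\<dots> = (\<Sum>n. ennreal (a n))" by (simp add: a_def emeasure_eq_measure)
    finally have "(\<integral>\<^sup>+\<omega>. ennreal (\<xi> \<omega>) \<partial>M) \<le> ennreal K * (1 + (\<Sum>n. ennreal (a n)))" .
    moreover have "ennreal K * (1 + (\<Sum>n. ennreal (a n))) < \<infinity>"
      using fin by (simp add: ennreal_mult_less_top less_top)
    ultimately show False using int_top by simp
  qed
  have nsum: "\<not> summable a" using sum_top ennreal_suminf_neq_top[of a] a_nonneg by auto
  have unb: "\<exists>m. B < (\<Sum>i<m. a (i+N))" for N B
  proof (rule ccontr)
    assume "\<not> ?thesis" then have "\<forall>m. (\<Sum>i<m. a (i+N)) \<le> B" by (auto simp: not_less)
    then have "summable (\<lambda>i. a (i+N))" by (intro summableI_nonneg_bounded[where x=B]) (auto simp: a_nonneg)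
    then have "summable a" by simp
    with nsum show False by simp
  qed
  define D where "D = distr M borel \<xi>"
  have PD: "prob_space D" unfolding D_def using assms(2) by (intro prob_space_distr)
  interpret PP: product_prob_space "\<lambda>_::nat. D" UNIV
    unfolding product_prob_space_def product_prob_space_axioms_def product_sigma_finite_def
    using PD by (auto intro: prob_space_imp_sigma_finite)
  have setsD[simp]: "sets D = sets borel" by (simp add: D_def)
  have Dlt: "emeasure D {..<c} = ennreal (1 - prob {\<omega>\<in>space M. c \<le> \<xi> \<omega>})" for c
  proof -
    have "emeasure D {..<c} = emeasure M (\<xi> -` {..<c} \<inter> space M)"
      unfolding D_def using assms(2) by (subst emeasure_distr) auto
    also have "\<xi> -` {..<c} \<inter> space M = space M - {\<omega>\<in>space M. c \<le> \<xi> \<omega>}" by auto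
    also have "emeasure M \<dots> = ennreal (1 - prob {\<omega>\<in>space M. c \<le> \<xi> \<omega>})"
      by (simp add: emeasure_eq_measure prob_compl)
    finally show ?thesis .
  qed
  define Q where "Q = (\<Pi>\<^sub>M k\<in>(UNIV::nat set). D)"
  define R where "R N m = {xs \<in> space Q. \<forall>n\<in>{N..<N+m}. xs n \<in> {..<K * real (Suc n)}}" for N m
  have Rsets: "R N m \<in> sets Q" for N m
  proof -
    have "R N m = prod_emb UNIV (\<lambda>_. D) {N..<N+m} (Pi\<^sub>E {N..<N+m} (\<lambda>n. {..<K * real (Suc n)}))"
      by (auto simp: R_def Q_def prod_emb_def space_PiM PiE_iff)
    also have "\<dots> \<in> sets Q" unfolding Q_def by (intro sets_PiM_I) auto
    finally show ?thesis .
  qed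
  have Rm: "measure Q (R N m) \<le> exp (- (\<Sum>i<m. a (i+N)))" for N m
  proof -
    have "emeasure Q (R N m) = (\<Prod>n\<in>{N..<N+m}. emeasure D {..<K * real (Suc n)})"
      unfolding R_def Q_def by (rule PP.emeasure_PiM_Collect) auto
    also have "\<dots> = ennreal (\<Prod>n\<in>{N..<N+m}. 1 - a n)"
      using a_le1 by (simp add: Dlt a_def prod_ennreal)
    finally have "measure Q (R N m) = (\<Prod>n\<in>{N..<N+m}. 1 - a n)"
      using a_le1 unfolding Q_def by (simp add: PP.emeasure_eq_measure prod_nonneg)
    also have "\<dots> \<le> (\<Prod>n\<in>{N..<N+m}. exp (- a n))"
    proof (intro prod_mono conjI)
      fix n show "0 \<le> 1 - a n" using a_le1[of n] by simp
      show "1 - a n \<le> exp (- a n)" using exp_ge_add_one_self[of "- a n"] by simp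
    qed
    also have "\<dots> = exp (- (\<Sum>n\<in>{N..<N+m}. a n))" by (simp only: sum_negf[symmetric] exp_sum[OF finite_atLeastLessThan])
    also have "\<dots> = exp (- (\<Sum>i<m. a (i+N)))" by (simp add: sum_shift_aux)
    finally show ?thesis .
  qed
  have null: "(\<Inter>m. R N m) \<in> null_sets Q" for N
  proof -
    have s: "(\<Inter>m. R N m) \<in> sets Q" using Rsets by auto
    have "measure Q (\<Inter>m. R N m) \<le> 0 + e" if "e > 0" for e
    proof -
      obtain m where m: "- ln e < (\<Sum>i<m. a (i+N))" using unb by blast
      have "exp (- (\<Sum>i<m. a (i+N))) < exp (ln e)" using m by simp
      then have "exp (- (\<Sum>i<m. a (i+N))) < e" using that by simp
      moreover have "measure Q (\<Inter>m. R N m) \<le> measure Q (R N m)"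
        unfolding Q_def using Rsets[unfolded Q_def] by (intro PP.finite_measure_mono) auto
      ultimately show ?thesis using Rm[of N m] by simp
    qed
    then have "measure Q (\<Inter>m. R N m) \<le> 0" by (rule field_le_epsilon)
    then have "measure Q (\<Inter>m. R N m) = 0" by (simp add: antisym)
    then have "emeasure Q (\<Inter>m. R N m) = 0" unfolding Q_def by (simp add: PP.emeasure_eq_measure)
    with s show ?thesis by (auto simp: null_sets_def)
  qed
  have "AE xs in Q. \<forall>N. \<exists>n\<ge>N. K * real (Suc n) \<le> xs n"
  proof (rule AE_I'[where N="\<Union>N. \<Inter>m. R N m"])
    show "(\<Union>N. \<Inter>m. R N m) \<in> null_sets Q" using null by auto
    show "{xs \<in> space Q. \<not> (\<forall>N. \<exists>n\<ge>N. K * real (Suc n) \<le> xs n)} \<subseteq> (\<Union>N. \<Inter>m. R N m)"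
    proof
      fix xs assume A: "xs \<in> {xs \<in> space Q. \<not> (\<forall>N. \<exists>n\<ge>N. K * real (Suc n) \<le> xs n)}"
      then have xs: "xs \<in> space Q" and nh: "\<not> (\<forall>N. \<exists>n\<ge>N. K * real (Suc n) \<le> xs n)" by auto
      from nh
      obtain N where N0: "\<forall>n\<ge>N. \<not> K * real (Suc n) \<le> xs n" by blast
      then have N: "\<forall>n\<ge>N. xs n < K * real (Suc n)" by (simp add: not_le)
      then have "xs \<in> R N m" for m using xs by (auto simp: R_def)
      then show "xs \<in> (\<Union>N. \<Inter>m. R N m)" by blast
    qed
  qed
  then show ?thesis by (simp only: Q_def D_def)
qed



theorem theorem1p2:
  fixes M :: "'a measure" and \<xi> :: "'a \<Rightarrow> real" and \<eta> :: real and p :: real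
  assumes "prob_space M"
    and "\<xi> \<in> borel_measurable M"
    and "AE \<omega> in M. \<xi> \<omega> > 0"
    and "0 < \<eta>" and "\<eta> < 1"
    and "(\<integral>\<^sup>+ \<omega>. ennreal (\<xi> \<omega> powr \<eta>) \<partial>M) = \<infinity>"
    and "0 \<le> p" and "p < 1"
  shows "AE xs in (\<Pi>\<^sub>M k\<in>UNIV. distr M borel \<xi>).
           percolates \<in> sets (perc_measure p xs) \<and> measure (perc_measure p xs) percolates = 0"
proof (cases "p = 0")
  case True
  have "measure (perc_measure p xs) percolates = 0" for xs
  proof -
    have "measure (perc_measure p xs) percolates \<le> 0"
      using perc_bound[of p 1 xs 0] True by simp
    then show ?thesis using measure_nonneg[of "perc_measure p xs" percolates] by linarith
  qed
  then show ?thesis using percolates_sets by simp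
next
  case False
  then have p0: "0 < p" using assms(7) by simp
  define K where "K = ln ((1-p)/4) / ln p"
  have lnp: "ln p < 0" using p0 assms(8) by simp
  have ln4: "ln ((1-p)/4) < 0" using p0 assms(8) by simp
  have pK: "p powr K = (1-p)/4"
    using p0 assms(8) lnp by (simp add: powr_def K_def)
  have K0: "0 < K" unfolding K_def using lnp ln4 by (simp add: divide_neg_neg)
  have "AE xs in (\<Pi>\<^sub>M k\<in>UNIV. distr M borel \<xi>). \<forall>N. \<exists>n\<ge>N. K * real (Suc n) \<le> xs n"
    by (rule BC[OF assms(1-6) K0])
  then show ?thesis
  proof eventually_elim
    fix xs :: "nat \<Rightarrow> real" assume H: "\<forall>N. \<exists>n\<ge>N. K * real (Suc n) \<le> xs n"
    have bnd: "measure (perc_measure p xs) percolates \<le> 2 / real (Suc N)" for N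
    proof -
      obtain n where n: "n \<ge> N" "K * real (Suc n) \<le> xs n" using H by blast
      obtain Hh where Hh: "0 < Hh" "(1 - (1-p)^Suc n)^Hh + real Hh * p powr xs n \<le> 2 / real (Suc n)"
        using numeric[OF p0 assms(8) pK n(2)] by blast
      have "measure (perc_measure p xs) percolates \<le> 2 / real (Suc n)"
        using perc_bound[OF assms(7,8) Hh(1), of xs n] Hh(2) by linarith
      also have "\<dots> \<le> 2 / real (Suc N)" using n(1) by (intro divide_left_mono) auto
      finally show ?thesis .
    qed
    have "measure (perc_measure p xs) percolates \<le> 0"
    proof (rule ccontr)
      assume "\<not> ?thesis"
      then have m: "0 < measure (perc_measure p xs) percolates" by simp
      define N where "N = nat \<lceil>2 / measure (perc_measure p xs) percolates\<rceil>"
      have "2 / measure (perc_measure p xs) percolates < real (Suc N)"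
        unfolding N_def by linarith
      then have "2 / real (Suc N) < measure (perc_measure p xs) percolates"
        using m by (simp add: field_simps)
      with bnd[of N] show False by simp
    qed
    then show "percolates \<in> sets (perc_measure p xs) \<and> measure (perc_measure p xs) percolates = 0"
      using percolates_sets measure_nonneg[of "perc_measure p xs" percolates] by simp
  qed
qed


end
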